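(* Let $G$ be a labeled complete bipartite graph (every edge labeled $+$ or $-$) with partite sets $V_1,V_2$, let $\alpha,\gamma$ be real parameters with $0<\gamma<\alpha<1/2$, and let $x$ be any fractional clustering of $G$. Let $\mathcal{C}$ be the clustering produced by the following algorithm (Algorithm 2), where ties in the choice of pivot are broken arbitrarily: Set $S=V(G)$. While $V_1\cap S\neq\emptyset$: for each $u\in V_1\cap S$ let $T_u=\{w\in S\setminus\{u\} : x_{uw}\le\alpha\}$ and $T^*_u=\{w\in V_2\cap S : x_{uw}\le\gamma\}$; choose a pivot $u\in V_1\cap S$ maximizing $|T^*_u|$ and let $T=T_u$; if $\sum_{w\in V_2\cap T}x_{uw}\ge\alpha|V_2\cap T|/2$, output the singleton cluster $\{u\}$ and set $S=S\setminus\{u\}$; otherwise output the cluster $\{u\}\cup T$ and set $S=S\setminus(\{u\}\cup T)$. After the loop, output each remaining vertex of $V_2\cap S$ as a singleton cluster. Then there is a constant $c$ depending only on $\alpha$ and $\gamma$ such that $\mathrm{err}(\mathcal{C})_v\le c\,\mathrm{err}(x)_v$ for all $v\in V_1$.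
   Context: A (discrete) clustering of $G$ is a partition of $V(G)$. A fractional clustering of $G$ is a vector $x$ indexed by all unordered pairs of distinct vertices of $G$ (not only edges) with $x_{uv}\in[0,1]$ for all pairs and $x_{vz}\le x_{vw}+x_{wz}$ for all distinct $v,w,z$; by convention $x_{uu}=0$. For vertex $v$, $N^+(v)$ and $N^-(v)$ denote the sets of vertices joined to $v$ by a $+$ edge, resp. a $-$ edge. The error vector of $x$ is the vector indexed by $V(G)$ with $\mathrm{err}(x)_v=\sum_{w\in N^+(v)}x_{vw}+\sum_{w\in N^-(v)}(1-x_{vw})$. For a clustering $\mathcal{C}$, $x^{\mathcal{C}}_{uv}=0$ if $u,v$ lie in the same cluster and $1$ otherwise, and $\mathrm{err}(\mathcal{C})=\mathrm{err}(x^{\mathcal{C}})$, i.e. the number of erroneous edges at each vertex ($+$ edges between clusters, $-$ edges within clusters). *)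

theory Defs
  imports Main "HOL-Library.Extended_Real" Complex_Main
begin

text \<open>Labeled complete bipartite graph with partite sets V1, V2: every pair {u,w} with
u in V1, w in V2 is an edge; its label is + iff lab u w (lab symmetric).\<close>

definition bip_adj :: "'a set \<Rightarrow> 'a set \<Rightarrow> 'a \<Rightarrow> 'a \<Rightarrow> bool" where
  "bip_adj V1 V2 u w \<longleftrightarrow> (u \<in> V1 \<and> w \<in> V2) \<or> (u \<in> V2 \<and> w \<in> V1)"

definition Npos :: "'a set \<Rightarrow> 'a set \<Rightarrow> ('a \<Rightarrow> 'a \<Rightarrow> bool) \<Rightarrow> 'a \<Rightarrow> 'a set" where
  "Npos V1 V2 lab v = {w. bip_adj V1 V2 v w \<and> lab v w}"

definition Nneg :: "'a set \<Rightarrow> 'a set \<Rightarrow> ('a \<Rightarrow> 'a \<Rightarrow> bool) \<Rightarrow> 'a \<Rightarrow> 'a set" where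
  "Nneg V1 V2 lab v = {w. bip_adj V1 V2 v w \<and> \<not> lab v w}"

definition frac_clustering :: "'a set \<Rightarrow> ('a \<Rightarrow> 'a \<Rightarrow> real) \<Rightarrow> bool" where
  "frac_clustering V x \<longleftrightarrow>
     (\<forall>u\<in>V. x u u = 0) \<and>
     (\<forall>u\<in>V. \<forall>w\<in>V. x u w = x w u) \<and>
     (\<forall>u\<in>V. \<forall>w\<in>V. u \<noteq> w \<longrightarrow> 0 \<le> x u w \<and> x u w \<le> 1) \<and>
     (\<forall>v\<in>V. \<forall>w\<in>V. \<forall>z\<in>V. v \<noteq> w \<and> w \<noteq> z \<and> v \<noteq> z \<longrightarrow> x v z \<le> x v w + x w z)"

definition err :: "'a set \<Rightarrow> 'a set \<Rightarrow> ('a \<Rightarrow> 'a \<Rightarrow> bool) \<Rightarrow> ('a \<Rightarrow> 'a \<Rightarrow> real) \<Rightarrow> 'a \<Rightarrow> real" where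
  "err V1 V2 lab x v =
     (\<Sum>w\<in>Npos V1 V2 lab v. x v w) + (\<Sum>w\<in>Nneg V1 V2 lab v. 1 - x v w)"

definition clust_vec :: "'a set set \<Rightarrow> 'a \<Rightarrow> 'a \<Rightarrow> real" where
  "clust_vec C u w = (if \<exists>K\<in>C. u \<in> K \<and> w \<in> K then 0 else 1)"

definition err_clust :: "'a set \<Rightarrow> 'a set \<Rightarrow> ('a \<Rightarrow> 'a \<Rightarrow> bool) \<Rightarrow> 'a set set \<Rightarrow> 'a \<Rightarrow> real" where
  "err_clust V1 V2 lab C v = err V1 V2 lab (clust_vec C) v"

definition T_set :: "('a \<Rightarrow> 'a \<Rightarrow> real) \<Rightarrow> real \<Rightarrow> 'a set \<Rightarrow> 'a \<Rightarrow> 'a set" where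
  "T_set x \<alpha> S u = {w \<in> S - {u}. x u w \<le> \<alpha>}"

definition Tstar_set :: "'a set \<Rightarrow> ('a \<Rightarrow> 'a \<Rightarrow> real) \<Rightarrow> real \<Rightarrow> 'a set \<Rightarrow> 'a \<Rightarrow> 'a set" where
  "Tstar_set V2 x \<gamma> S u = {w \<in> V2 \<inter> S. x u w \<le> \<gamma>}"

text \<open>alg2_run V1 V2 x \<alpha> \<gamma> S C: starting from remaining set S, Algorithm 2 (with some
  choice of tie-breaking) outputs the clusters C.\<close>
inductive alg2_run :: "'a set \<Rightarrow> 'a set \<Rightarrow> ('a \<Rightarrow> 'a \<Rightarrow> real) \<Rightarrow> real \<Rightarrow> real \<Rightarrow> 'a set \<Rightarrow> 'a set set \<Rightarrow> bool"
  for V1 V2 x \<alpha> \<gamma> where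
  stop: "V1 \<inter> S = {} \<Longrightarrow> alg2_run V1 V2 x \<alpha> \<gamma> S ((\<lambda>w. {w}) ` (V2 \<inter> S))"
| single: "\<lbrakk> u \<in> V1 \<inter> S;
            \<forall>u'\<in>V1 \<inter> S. card (Tstar_set V2 x \<gamma> S u') \<le> card (Tstar_set V2 x \<gamma> S u);
            (\<Sum>w\<in>V2 \<inter> T_set x \<alpha> S u. x u w) \<ge> \<alpha> * real (card (V2 \<inter> T_set x \<alpha> S u)) / 2;
            alg2_run V1 V2 x \<alpha> \<gamma> (S - {u}) C \<rbrakk>
           \<Longrightarrow> alg2_run V1 V2 x \<alpha> \<gamma> S (insert {u} C)"
| cluster: "\<lbrakk> u \<in> V1 \<inter> S;
            \<forall>u'\<in>V1 \<inter> S. card (Tstar_set V2 x \<gamma> S u') \<le> card (Tstar_set V2 x \<gamma> S u);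
            \<not> ((\<Sum>w\<in>V2 \<inter> T_set x \<alpha> S u. x u w) \<ge> \<alpha> * real (card (V2 \<inter> T_set x \<alpha> S u)) / 2);
            alg2_run V1 V2 x \<alpha> \<gamma> (S - ({u} \<union> T_set x \<alpha> S u)) C \<rbrakk>
           \<Longrightarrow> alg2_run V1 V2 x \<alpha> \<gamma> S (insert ({u} \<union> T_set x \<alpha> S u) C)"

end

theory Submission imports Defs begin

locale alg =
  fixes V1 V2 :: "nat set" and lab :: "nat \<Rightarrow> nat \<Rightarrow> bool" and x :: "nat \<Rightarrow> nat \<Rightarrow> real"
    and \<alpha> \<gamma> :: real
  assumes fin1: "finite V1" and fin2: "finite V2" and disj: "V1 \<inter> V2 = {}"
    and fc: "frac_clustering (V1 \<union> V2) x"
    and g0: "0 < \<gamma>" and ga: "\<gamma> < \<alpha>" and ah: "\<alpha> < 1/2"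
begin

definition cost where "cost v w = (if lab v w then x v w else 1 - x v w)"
definition kap where "kap = min (\<alpha>/2) (min (1/4) (min (\<gamma>/2) (min ((1-\<alpha>-\<gamma>)/2) ((1-2*\<alpha>)/2))))"

lemma kap_pos: "0 < kap" using g0 ga ah by (auto simp: kap_def)
lemma kap_le: "kap \<le> \<alpha>/2" "kap \<le> 1/4" "kap \<le> \<gamma>/2" "kap \<le> (1-\<alpha>-\<gamma>)/2" "kap \<le> (1-2*\<alpha>)/2"
  unfolding kap_def
  apply (rule min.coboundedI1; simp)
  apply (rule min.coboundedI2, rule min.coboundedI1; simp)
  apply (rule min.coboundedI2, rule min.coboundedI2, rule min.coboundedI1; simp)
  apply (rule min.coboundedI2, rule min.coboundedI2, rule min.coboundedI2, rule min.coboundedI1; simp)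
  apply (rule min.coboundedI2, rule min.coboundedI2, rule min.coboundedI2, rule min.coboundedI2; simp)
  done

lemma xb: "a \<in> V1\<union>V2 \<Longrightarrow> b \<in> V1\<union>V2 \<Longrightarrow> a \<noteq> b \<Longrightarrow> 0 \<le> x a b \<and> x a b \<le> 1"
  using fc unfolding frac_clustering_def by blast
lemma xs: "a \<in> V1\<union>V2 \<Longrightarrow> b \<in> V1\<union>V2 \<Longrightarrow> x a b = x b a"
  using fc unfolding frac_clustering_def by blast
lemma tri: "a \<in> V1\<union>V2 \<Longrightarrow> b \<in> V1\<union>V2 \<Longrightarrow> c \<in> V1\<union>V2 \<Longrightarrow> a \<noteq> b \<Longrightarrow> b \<noteq> c \<Longrightarrow> a \<noteq> c
   \<Longrightarrow> x a c \<le> x a b + x b c"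
  using fc unfolding frac_clustering_def by blast

lemma ne12: "a \<in> V1 \<Longrightarrow> b \<in> V2 \<Longrightarrow> a \<noteq> b" using disj by blast

lemma cost_nonneg: "v \<in> V1 \<Longrightarrow> w \<in> V2 \<Longrightarrow> 0 \<le> cost v w"
  using xb[of v w] ne12[of v w] by (auto simp: cost_def)

lemma other_cluster:
  assumes S: "S \<subseteq> V1\<union>V2" and u: "u \<in> V1\<inter>S" and v: "v \<in> V1\<inter>S" "v \<noteq> u"
    and vT: "v \<notin> T_set x \<alpha> S u"
    and lt: "\<not> (\<alpha> * real (card (V2 \<inter> T_set x \<alpha> S u)) / 2 \<le> (\<Sum>w\<in>V2 \<inter> T_set x \<alpha> S u. x u w))"
  shows "kap * (\<Sum>w\<in>V2 \<inter> T_set x \<alpha> S u. (if lab v w then 1 else 0)) \<le> (\<Sum>w\<in>V2 \<inter> T_set x \<alpha> S u. cost v w)"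
proof -
  let ?K = "V2 \<inter> T_set x \<alpha> S u"
  have finK: "finite ?K" using fin2 by auto
  have xuv: "x u v > \<alpha>" using vT v by (auto simp: T_set_def)
  have wK: "w \<in> V2 \<and> w \<in> S \<and> x u w \<le> \<alpha> \<and> w \<noteq> u \<and> w \<noteq> v" if "w \<in> ?K" for w
    using that u v ne12 by (auto simp: T_set_def)
  have uV: "u \<in> V1 \<union> V2" "v \<in> V1 \<union> V2" using u v by auto
  have lb: "x v w \<ge> x u v - x u w" if "w \<in> ?K" for w
    using tri[of u w v] wK[OF that] xs[of w v] uV v(2) by auto
  have ub: "x v w \<le> x u v + x u w" if "w \<in> ?K" for w
    using tri[of v u w] wK[OF that] xs[of v u] uV v(2) by auto
  have b01: "0 \<le> x v w \<and> x v w \<le> 1" "0 \<le> x u w" if "w \<in> ?K" for w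
    using xb[of v w] xb[of u w] wK[OF that] uV by auto
  show ?thesis
  proof (cases "x u v \<le> 1 - \<alpha>/2")
    case True
    have "kap * (\<Sum>w\<in>?K. (if lab v w then 1 else 0)) = (\<Sum>w\<in>?K. kap * (if lab v w then 1 else 0))"
      by (simp add: sum_distrib_left)
    also have "\<dots> \<le> (\<Sum>w\<in>?K. cost v w + (x u w - \<alpha>/2))"
    proof (rule sum_mono)
      fix w assume w: "w \<in> ?K"
      show "kap * (if lab v w then 1 else 0) \<le> cost v w + (x u w - \<alpha>/2)"
        using lb[OF w] ub[OF w] True xuv kap_le(1) by (auto simp: cost_def)
    qed
    also have "\<dots> = (\<Sum>w\<in>?K. cost v w) + ((\<Sum>w\<in>?K. x u w) - real (card ?K) * (\<alpha>/2))"
      by (simp add: sum.distrib sum_subtractf)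
    also have "\<dots> \<le> (\<Sum>w\<in>?K. cost v w)" using lt by (simp add: mult.commute)
    finally show ?thesis .
  next
    case False
    have "kap * (\<Sum>w\<in>?K. (if lab v w then 1 else 0)) = (\<Sum>w\<in>?K. kap * (if lab v w then 1 else 0))"
      by (simp add: sum_distrib_left)
    also have "\<dots> \<le> (\<Sum>w\<in>?K. cost v w)"
    proof (rule sum_mono)
      fix w assume w: "w \<in> ?K"
      show "kap * (if lab v w then 1 else 0) \<le> cost v w"
        using lb[OF w] wK[OF w] b01[OF w] False kap_le(2) ah by (auto simp: cost_def)
    qed
    finally show ?thesis .
  qed
qed

lemma pivot_single:
  assumes S: "S \<subseteq> V1\<union>V2" and u: "u \<in> V1\<inter>S"
    and ge: "\<alpha> * real (card (V2 \<inter> T_set x \<alpha> S u)) / 2 \<le> (\<Sum>w\<in>V2 \<inter> T_set x \<alpha> S u. x u w)"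
  shows "kap * (\<Sum>w\<in>V2 \<inter> S. (if lab u w then 1 else 0)) \<le> (\<Sum>w\<in>V2 \<inter> S. cost u w)"
proof -
  let ?T = "T_set x \<alpha> S u"
  have fin: "finite (V2 \<inter> S)" using fin2 by auto
  have eqK: "V2 \<inter> S \<inter> ?T = V2 \<inter> ?T" by (auto simp: T_set_def)
  have "kap * (\<Sum>w\<in>V2 \<inter> S. (if lab u w then 1 else 0)) = (\<Sum>w\<in>V2 \<inter> S. kap * (if lab u w then 1 else 0))"
    by (simp add: sum_distrib_left)
  also have "\<dots> \<le> (\<Sum>w\<in>V2 \<inter> S. cost u w + (if w \<in> ?T then \<alpha>/2 - x u w else 0))"
  proof (rule sum_mono)
    fix w assume w: "w \<in> V2 \<inter> S"
    have uw: "u \<noteq> w" using ne12 u w by auto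
    have b: "0 \<le> x u w \<and> x u w \<le> 1" using xb[of u w] uw u w by auto
    show "kap * (if lab u w then 1 else 0) \<le> cost u w + (if w \<in> ?T then \<alpha>/2 - x u w else 0)"
      using b uw w kap_le(1) ah ga g0 by (auto simp: cost_def T_set_def)
  qed
  also have "\<dots> = (\<Sum>w\<in>V2 \<inter> S. cost u w) + (\<Sum>w\<in>V2 \<inter> ?T. \<alpha>/2 - x u w)"
    by (simp add: sum.distrib sum.inter_restrict[OF fin, symmetric] eqK)
  also have "\<dots> \<le> (\<Sum>w\<in>V2 \<inter> S. cost u w)"
    using ge by (simp add: sum_subtractf mult.commute)
  finally show ?thesis .
qed

lemma pivot_cluster:
  assumes S: "S \<subseteq> V1\<union>V2" and u: "u \<in> V1\<inter>S"
  shows "kap * (\<Sum>w\<in>V2 \<inter> S. (if w \<in> T_set x \<alpha> S u then (if lab u w then 0 else 1) else (if lab u w then 1 else 0)))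
     \<le> (\<Sum>w\<in>V2 \<inter> S. cost u w)"
proof -
  have "kap * (\<Sum>w\<in>V2 \<inter> S. (if w \<in> T_set x \<alpha> S u then (if lab u w then 0 else 1) else (if lab u w then 1 else 0)))
     = (\<Sum>w\<in>V2 \<inter> S. kap * (if w \<in> T_set x \<alpha> S u then (if lab u w then 0 else 1) else (if lab u w then 1 else 0)))"
    by (simp add: sum_distrib_left)
  also have "\<dots> \<le> (\<Sum>w\<in>V2 \<inter> S. cost u w)"
  proof (rule sum_mono)
    fix w assume w: "w \<in> V2 \<inter> S"
    have uw: "u \<noteq> w" using ne12 u w by auto
    have b: "0 \<le> x u w \<and> x u w \<le> 1" using xb[of u w] uw u w by auto
    show "kap * (if w \<in> T_set x \<alpha> S u then (if lab u w then 0 else 1) else (if lab u w then 1 else 0)) \<le> cost u w"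
      using b uw w kap_le(1) kap_le(2) ah ga g0 by (auto simp: cost_def T_set_def)
  qed
  finally show ?thesis .
qed

lemma member_cluster:
  assumes S: "S \<subseteq> V1\<union>V2" and u: "u \<in> V1\<inter>S" and v: "v \<in> V1" "v \<in> T_set x \<alpha> S u"
    and cs: "card (Tstar_set V2 x \<gamma> S v) \<le> card (Tstar_set V2 x \<gamma> S u)"
  shows "kap * (\<Sum>w\<in>V2 \<inter> S. (if w \<in> T_set x \<alpha> S u then (if lab v w then 0 else 1) else (if lab v w then 1 else 0)))
     \<le> (\<Sum>w\<in>V2 \<inter> S. cost v w)"
proof -
  let ?T = "T_set x \<alpha> S u"
  let ?A = "Tstar_set V2 x \<gamma> S v"
  let ?Bs = "Tstar_set V2 x \<gamma> S u"
  define D where "D = ?Bs - ?A"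
  define B where "B = {w \<in> V2 \<inter> S. w \<notin> ?T \<and> lab v w \<and> x v w \<le> \<gamma>}"
  have fin: "finite (V2 \<inter> S)" using fin2 by auto
  have finA: "finite ?A" "finite ?Bs" using fin2 by (auto simp: Tstar_set_def)
  have vS: "v \<in> S" "v \<noteq> u" "x u v \<le> \<alpha>" using v by (auto simp: T_set_def)
  have BA: "B \<subseteq> ?A - ?Bs" using ga u ne12 by (auto simp: B_def Tstar_set_def T_set_def)
  have DT: "D \<subseteq> V2 \<inter> S \<inter> ?T" using ga u ne12 by (auto simp: D_def Tstar_set_def T_set_def)
  have BS: "B \<subseteq> V2 \<inter> S" by (auto simp: B_def)
  have "card B \<le> card (?A - ?Bs)" using BA finA by (simp add: card_mono)
  also have "\<dots> = card ?A - card (?A \<inter> ?Bs)" using finA by (simp add: card_Diff_subset_Int)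
  also have "\<dots> \<le> card ?Bs - card (?Bs \<inter> ?A)" using cs by (simp add: Int_commute)
  also have "\<dots> = card D" using finA by (simp add: card_Diff_subset_Int D_def)
  finally have cBD: "real (card B) \<le> real (card D)" by simp
  have uV: "u \<in> V1 \<union> V2" "v \<in> V1 \<union> V2" using u v by auto
  have "kap * (\<Sum>w\<in>V2 \<inter> S. (if w \<in> ?T then (if lab v w then 0 else 1) else (if lab v w then 1 else 0)))
     = (\<Sum>w\<in>V2 \<inter> S. kap * (if w \<in> ?T then (if lab v w then 0 else 1) else (if lab v w then 1 else 0)))"
    by (simp add: sum_distrib_left)
  also have "\<dots> \<le> (\<Sum>w\<in>V2 \<inter> S. cost v w + ((if w \<in> B then kap else 0) - (if w \<in> D then kap else 0)))"
  proof (rule sum_mono)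
    fix w assume w: "w \<in> V2 \<inter> S"
    have uw: "u \<noteq> w" "v \<noteq> w" using ne12 u v w by auto
    have b: "0 \<le> x v w \<and> x v w \<le> 1" "0 \<le> x u w" using xb[of u w] xb[of v w] uw u v w by auto
    have ub: "x v w \<le> x u v + x u w"
      using tri[of v u w] w xs[of v u] uV vS uw by auto
    show "kap * (if w \<in> ?T then (if lab v w then 0 else 1) else (if lab v w then 1 else 0))
        \<le> cost v w + ((if w \<in> B then kap else 0) - (if w \<in> D then kap else 0))"
    proof (cases "w \<in> ?T")
      case True
      then have "w \<notin> B" by (auto simp: B_def)
      moreover have "x u w \<le> \<alpha>" using True by (auto simp: T_set_def)
      moreover have "w \<in> D \<Longrightarrow> x u w \<le> \<gamma> \<and> x v w > \<gamma>" using w by (auto simp: D_def Tstar_set_def)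
      ultimately show ?thesis using True ub vS b kap_le kap_pos
        by (auto simp: cost_def)
    next
      case False
      then have "w \<notin> D" using DT by auto
      moreover have "lab v w \<Longrightarrow> x v w \<le> \<gamma> \<Longrightarrow> w \<in> B" using w False by (auto simp: B_def)
      ultimately show ?thesis using False b kap_le kap_pos
        by (cases "x v w \<le> \<gamma>") (auto simp: cost_def)
    qed
  qed
  also have "\<dots> = (\<Sum>w\<in>V2 \<inter> S. cost v w) + (kap * real (card B) - kap * real (card D))"
  proof -
    have e1: "(\<Sum>w\<in>V2 \<inter> S. (if w \<in> B then kap else 0)) = kap * real (card B)"
      using sum.inter_restrict[OF fin, of "\<lambda>_. kap" B, symmetric] BS
      by (simp add: Int_absorb1)
    have e2: "(\<Sum>w\<in>V2 \<inter> S. (if w \<in> D then kap else 0)) = kap * real (card D)"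
      using sum.inter_restrict[OF fin, of "\<lambda>_. kap" D, symmetric] DT
      by (simp add: Int_absorb1)
    show ?thesis by (simp add: sum.distrib sum_subtractf e1 e2)
  qed
  also have "\<dots> \<le> (\<Sum>w\<in>V2 \<inter> S. cost v w)" using cBD kap_pos
    by (simp add: mult_left_mono)
  finally show ?thesis .
qed

definition ee where "ee C v w = (if lab v w then clust_vec C v w else 1 - clust_vec C v w)"

lemma cv_out: "a \<notin> K \<Longrightarrow> clust_vec (insert K C) a b = clust_vec C a b"
  by (auto simp: clust_vec_def)
lemma cv_in: "a \<in> K \<Longrightarrow> b \<in> K \<Longrightarrow> clust_vec (insert K C) a b = 0"
  by (auto simp: clust_vec_def)
lemma cv_sep: "a \<in> K \<Longrightarrow> b \<notin> K \<Longrightarrow> a \<notin> \<Union>C \<Longrightarrow> clust_vec (insert K C) a b = 1"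
  by (auto simp: clust_vec_def)
lemma cv_sep': "a \<notin> K \<Longrightarrow> b \<in> K \<Longrightarrow> b \<notin> \<Union>C \<Longrightarrow> clust_vec (insert K C) a b = 1"
  by (auto simp: clust_vec_def)

lemma err_eq: "v \<in> V1 \<Longrightarrow> err V1 V2 lab y v = (\<Sum>w\<in>V2. if lab v w then y v w else 1 - y v w)"
proof -
  assume v: "v \<in> V1"
  have "Npos V1 V2 lab v = V2 \<inter> {w. lab v w}" "Nneg V1 V2 lab v = V2 \<inter> - {w. lab v w}"
    using v disj by (auto simp: Npos_def Nneg_def bip_adj_def)
  then show ?thesis by (simp add: err_def sum.If_cases[OF fin2])
qed

lemma main:
  "alg2_run V1 V2 x \<alpha> \<gamma> S C \<Longrightarrow> S \<subseteq> V1\<union>V2 \<Longrightarrow>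
    \<Union>C \<subseteq> S \<and> (\<forall>v\<in>V1\<inter>S. kap * (\<Sum>w\<in>V2\<inter>S. ee C v w) \<le> (\<Sum>w\<in>V2\<inter>S. cost v w))"
proof (induction rule: alg2_run.induct)
  case (stop S)
  then show ?case by auto
next
  case (single u S C)
  from single.IH single.prems have IH1: "\<Union>C \<subseteq> S - {u}"
    and IH2: "\<forall>v\<in>V1\<inter>(S-{u}). kap * (\<Sum>w\<in>V2\<inter>(S-{u}). ee C v w) \<le> (\<Sum>w\<in>V2\<inter>(S-{u}). cost v w)"
    by auto
  have V2S: "V2 \<inter> (S - {u}) = V2 \<inter> S" using single.hyps(1) disj by auto
  show ?case
  proof (intro conjI ballI)
    show "\<Union>(insert {u} C) \<subseteq> S" using IH1 single.hyps(1) by auto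
  next
    fix v assume v: "v \<in> V1 \<inter> S"
    show "kap * (\<Sum>w\<in>V2\<inter>S. ee (insert {u} C) v w) \<le> (\<Sum>w\<in>V2\<inter>S. cost v w)"
    proof (cases "v = u")
      case True
      have "(\<Sum>w\<in>V2\<inter>S. ee (insert {u} C) v w) = (\<Sum>w\<in>V2\<inter>S. (if lab u w then 1 else 0))"
      proof (rule sum.cong[OF refl])
        fix w assume w: "w \<in> V2 \<inter> S"
        have "w \<noteq> u" using w single.hyps(1) ne12 by auto
        then have "clust_vec (insert {u} C) u w = 1" using IH1 by (intro cv_sep) auto
        then show "ee (insert {u} C) v w = (if lab u w then 1 else 0)" using True by (simp add: ee_def)
      qed
      then show ?thesis using pivot_single[OF single.prems single.hyps(1) single.hyps(3)] True by simp
    next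
      case False
      have "(\<Sum>w\<in>V2\<inter>S. ee (insert {u} C) v w) = (\<Sum>w\<in>V2\<inter>(S-{u}). ee C v w)"
        unfolding V2S by (rule sum.cong[OF refl]) (use False in \<open>simp add: ee_def cv_out\<close>)
      then show ?thesis using IH2 v False V2S by auto
    qed
  qed
next
  case (cluster u S C)
  let ?T = "T_set x \<alpha> S u"
  let ?K = "{u} \<union> ?T"
  from cluster.IH cluster.prems have IH1: "\<Union>C \<subseteq> S - ?K"
    and IH2: "\<forall>v\<in>V1\<inter>(S-?K). kap * (\<Sum>w\<in>V2\<inter>(S-?K). ee C v w) \<le> (\<Sum>w\<in>V2\<inter>(S-?K). cost v w)"
    by auto
  have TS: "?T \<subseteq> S" by (auto simp: T_set_def)
  have fin: "finite (V2 \<inter> S)" using fin2 by auto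
  show ?case
  proof (intro conjI ballI)
    show "\<Union>(insert ?K C) \<subseteq> S" using IH1 cluster.hyps(1) TS by auto
  next
    fix v assume v: "v \<in> V1 \<inter> S"
    show "kap * (\<Sum>w\<in>V2\<inter>S. ee (insert ?K C) v w) \<le> (\<Sum>w\<in>V2\<inter>S. cost v w)"
    proof (cases "v \<in> ?K")
      case True
      have eq: "(\<Sum>w\<in>V2\<inter>S. ee (insert ?K C) v w) =
         (\<Sum>w\<in>V2 \<inter> S. (if w \<in> ?T then (if lab v w then 0 else 1) else (if lab v w then 1 else 0)))"
      proof (rule sum.cong[OF refl])
        fix w assume w: "w \<in> V2 \<inter> S"
        have "w \<noteq> u" using w cluster.hyps(1) ne12 by auto
        show "ee (insert ?K C) v w = (if w \<in> ?T then (if lab v w then 0 else 1) else (if lab v w then 1 else 0))"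
        proof (cases "w \<in> ?T")
          case True
          then show ?thesis using \<open>v \<in> ?K\<close> by (simp add: ee_def cv_in)
        next
          case False
          have "clust_vec (insert ?K C) v w = 1"
            using \<open>v \<in> ?K\<close> False \<open>w \<noteq> u\<close> IH1 by (intro cv_sep) auto
          then show ?thesis using False by (simp add: ee_def)
        qed
      qed
      show ?thesis
      proof (cases "v = u")
        case True
        show ?thesis using eq pivot_cluster[OF cluster.prems cluster.hyps(1)] unfolding \<open>v = u\<close> by simp
      next
        case False
        then have vT: "v \<in> ?T" using \<open>v \<in> ?K\<close> by auto
        have "card (Tstar_set V2 x \<gamma> S v) \<le> card (Tstar_set V2 x \<gamma> S u)"
          using cluster.hyps(2) v by auto
        then show ?thesis using eq member_cluster[OF cluster.prems cluster.hyps(1) _ vT] v by simp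
      qed
    next
      case False
      have vS': "v \<in> V1 \<inter> (S - ?K)" using v False by auto
      have split: "V2 \<inter> S = (V2 \<inter> (S - ?K)) \<union> (V2 \<inter> ?T)" using TS cluster.hyps(1) disj by auto
      have dj: "(V2 \<inter> (S - ?K)) \<inter> (V2 \<inter> ?T) = {}" by auto
      have f1: "finite (V2 \<inter> (S - ?K))" "finite (V2 \<inter> ?T)" using fin2 by auto
      have s1: "(\<Sum>w\<in>V2\<inter>(S-?K). ee (insert ?K C) v w) = (\<Sum>w\<in>V2\<inter>(S-?K). ee C v w)"
        by (rule sum.cong[OF refl]) (use False in \<open>simp add: ee_def cv_out\<close>)
      have s2: "(\<Sum>w\<in>V2\<inter>?T. ee (insert ?K C) v w) = (\<Sum>w\<in>V2\<inter>?T. (if lab v w then 1 else 0))"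
      proof (rule sum.cong[OF refl])
        fix w assume w: "w \<in> V2 \<inter> ?T"
        have "clust_vec (insert ?K C) v w = 1" using False w IH1 by (intro cv_sep') auto
        then show "ee (insert ?K C) v w = (if lab v w then 1 else 0)" by (simp add: ee_def)
      qed
      have vu: "v \<noteq> u" using False by auto
      have L: "kap * (\<Sum>w\<in>V2\<inter>?T. (if lab v w then 1 else 0)) \<le> (\<Sum>w\<in>V2\<inter>?T. cost v w)"
        using other_cluster[OF cluster.prems cluster.hyps(1) v vu _ cluster.hyps(3)] False by auto
      have "kap * (\<Sum>w\<in>V2\<inter>S. ee (insert ?K C) v w)
          = kap * (\<Sum>w\<in>V2\<inter>(S-?K). ee C v w) + kap * (\<Sum>w\<in>V2\<inter>?T. (if lab v w then 1 else 0))"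
        unfolding split sum.union_disjoint[OF f1 dj] s1 s2 by (simp add: distrib_left)
      also have "\<dots> \<le> (\<Sum>w\<in>V2\<inter>(S-?K). cost v w) + (\<Sum>w\<in>V2\<inter>?T. cost v w)"
        using IH2 vS' L by (intro add_mono) auto
      also have "\<dots> = (\<Sum>w\<in>V2\<inter>S. cost v w)"
        unfolding split sum.union_disjoint[OF f1 dj] ..
      finally show ?thesis .
    qed
  qed
qed

end

theorem theorem2:
  fixes \<alpha> \<gamma> :: real
  assumes "0 < \<gamma>" and "\<gamma> < \<alpha>" and "\<alpha> < 1/2"
  shows "\<exists>c::real. \<forall>(V1::nat set) (V2::nat set) (lab::nat \<Rightarrow> nat \<Rightarrow> bool)
            (x::nat \<Rightarrow> nat \<Rightarrow> real) (C::nat set set).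
           finite V1 \<and> finite V2 \<and> V1 \<inter> V2 = {} \<and> (\<forall>u w. lab u w = lab w u) \<and>
           frac_clustering (V1 \<union> V2) x \<and> alg2_run V1 V2 x \<alpha> \<gamma> (V1 \<union> V2) C
           \<longrightarrow> (\<forall>v\<in>V1. err_clust V1 V2 lab C v \<le> c * err V1 V2 lab x v)"
proof -
  define k :: real where "k = min (\<alpha>/2) (min (1/4) (min (\<gamma>/2) (min ((1-\<alpha>-\<gamma>)/2) ((1-2*\<alpha>)/2))))"
  show ?thesis
  proof (rule exI[of _ "1/k"], intro allI impI ballI)
    fix V1 V2 :: "nat set" and lab :: "nat \<Rightarrow> nat \<Rightarrow> bool" and x :: "nat \<Rightarrow> nat \<Rightarrow> real"
      and C :: "nat set set" and v
    assume H: "finite V1 \<and> finite V2 \<and> V1 \<inter> V2 = {} \<and> (\<forall>u w. lab u w = lab w u) \<and>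
           frac_clustering (V1 \<union> V2) x \<and> alg2_run V1 V2 x \<alpha> \<gamma> (V1 \<union> V2) C"
      and v: "v \<in> V1"
    interpret alg V1 V2 lab x \<alpha> \<gamma> using H assms by unfold_locales auto
    have kk: "kap = k" by (simp add: kap_def k_def)
    have "kap * (\<Sum>w\<in>V2\<inter>(V1\<union>V2). ee C v w) \<le> (\<Sum>w\<in>V2\<inter>(V1\<union>V2). cost v w)"
      using main[of "V1 \<union> V2" C] H v by auto
    moreover have "V2 \<inter> (V1 \<union> V2) = V2" by auto
    ultimately have I: "k * err_clust V1 V2 lab C v \<le> err V1 V2 lab x v"
      using v by (simp add: kk err_clust_def err_eq ee_def cost_def)
    have kp: "0 < k" using kap_pos kk by simp
    from I kp show "err_clust V1 V2 lab C v \<le> 1 / k * err V1 V2 lab x v"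
      by (simp add: field_simps)
  qed
qed

end
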